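(* Let $A, C, D$ be binary random variables, with $A$ taking values $a,\overline{a}$, $C$ taking values $c,\overline{c}$, $D$ taking values $d,\overline{d}$, and let $Y$ be a real random variable with finite expectation. Suppose the joint distribution factorizes as \[ p(A,C,D,Y)=p(C)\,p(D\mid C)\,p(A\mid C)\,p(Y\mid A,C), \] and that every event $\{A=x, C=y, D=z\}$ has positive probability. Let $p(c)=0.5$, $p(d\mid c)=p(\overline{d}\mid\overline{c})\ge 0.5$ and $p(\overline{a}\mid\overline{c})\ge p(a\mid c)\ge 0.5$. If \[ E[Y|a,c]-E[Y|a,\overline{c}]\ \le\ E[Y|\overline{a},\overline{c}]-E[Y|\overline{a},c]\ \le\ 0, \] then $RD_{crude}\le RD_{true}$ and $RD_{obs}\le RD_{true}$.
   Context: $RD_{true}=E[Y|a,c]p(c)+E[Y|a,\overline{c}]p(\overline{c})-E[Y|\overline{a},c]p(c)-E[Y|\overline{a},\overline{c}]p(\overline{c})$; $RD_{crude}=E[Y|a]-E[Y|\overline{a}]$; $RD_{obs}=E[Y|a,d]p(d)+E[Y|a,\overline{d}]p(\overline{d})-E[Y|\overline{a},d]p(d)-E[Y|\overline{a},\overline{d}]p(\overline{d})$. *)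

theory Defs
  imports "HOL-Probability.Probability"
begin

text \<open>Binary random variables are modelled as Boolean-valued functions on the sample
space: A = True means the value a, A = False means the value a-bar (likewise C, D).\<close>

definition ev :: "'s measure \<Rightarrow> ('s \<Rightarrow> bool) \<Rightarrow> 's set" where
  "ev M P = {\<omega> \<in> space M. P \<omega>}"

definition pr :: "'s measure \<Rightarrow> ('s \<Rightarrow> bool) \<Rightarrow> real" where
  "pr M P = measure M (ev M P)"

definition cpr :: "'s measure \<Rightarrow> ('s \<Rightarrow> bool) \<Rightarrow> ('s \<Rightarrow> bool) \<Rightarrow> real" where
  "cpr M P Q = pr M (\<lambda>\<omega>. P \<omega> \<and> Q \<omega>) / pr M Q"

definition cexp :: "'s measure \<Rightarrow> ('s \<Rightarrow> real) \<Rightarrow> ('s \<Rightarrow> bool) \<Rightarrow> real" where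
  "cexp M Y P = (LINT \<omega>:ev M P|M. Y \<omega>) / pr M P"

definition RD_true :: "'s measure \<Rightarrow> ('s \<Rightarrow> bool) \<Rightarrow> ('s \<Rightarrow> bool) \<Rightarrow> ('s \<Rightarrow> real) \<Rightarrow> real" where
  "RD_true M A C Y =
     cexp M Y (\<lambda>\<omega>. A \<omega> \<and> C \<omega>) * pr M C
   + cexp M Y (\<lambda>\<omega>. A \<omega> \<and> \<not> C \<omega>) * pr M (\<lambda>\<omega>. \<not> C \<omega>)
   - cexp M Y (\<lambda>\<omega>. \<not> A \<omega> \<and> C \<omega>) * pr M C
   - cexp M Y (\<lambda>\<omega>. \<not> A \<omega> \<and> \<not> C \<omega>) * pr M (\<lambda>\<omega>. \<not> C \<omega>)"

definition RD_crude :: "'s measure \<Rightarrow> ('s \<Rightarrow> bool) \<Rightarrow> ('s \<Rightarrow> real) \<Rightarrow> real" where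
  "RD_crude M A Y = cexp M Y A - cexp M Y (\<lambda>\<omega>. \<not> A \<omega>)"

definition RD_obs :: "'s measure \<Rightarrow> ('s \<Rightarrow> bool) \<Rightarrow> ('s \<Rightarrow> bool) \<Rightarrow> ('s \<Rightarrow> real) \<Rightarrow> real" where
  "RD_obs M A D Y = RD_true M A D Y"

end

theory Submission
  imports Defs
begin

definition atm :: "'s measure \<Rightarrow> ('s\<Rightarrow>bool) \<Rightarrow> ('s\<Rightarrow>bool) \<Rightarrow> ('s\<Rightarrow>bool) \<Rightarrow> bool \<Rightarrow> bool \<Rightarrow> bool \<Rightarrow> 's set" where
  "atm M A C D x y z = ev M (\<lambda>\<omega>. A \<omega> = x \<and> C \<omega> = y \<and> D \<omega> = z)"

lemma ev_eq_meas:
  assumes "ev M A \<in> sets M" shows "ev M (\<lambda>\<omega>. A \<omega> = x) \<in> sets M"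
proof (cases x)
  case True then show ?thesis using assms by (simp add: ev_def)
next
  case False
  have "ev M (\<lambda>\<omega>. A \<omega> = x) = space M - ev M A" using False by (auto simp: ev_def)
  then show ?thesis using assms by auto
qed

lemma atm_meas:
  assumes "ev M A \<in> sets M" "ev M C \<in> sets M" "ev M D \<in> sets M"
  shows "atm M A C D x y z \<in> sets M"
proof -
  have "atm M A C D x y z = ev M (\<lambda>\<omega>. A \<omega> = x) \<inter> ev M (\<lambda>\<omega>. C \<omega> = y) \<inter> ev M (\<lambda>\<omega>. D \<omega> = z)"
    by (auto simp: atm_def ev_def)
  then show ?thesis using ev_eq_meas[OF assms(1)] ev_eq_meas[OF assms(2)] ev_eq_meas[OF assms(3)] by auto
qed

lemma ev_f_meas:
  assumes "ev M A \<in> sets M" "ev M C \<in> sets M" "ev M D \<in> sets M"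
  shows "ev M (\<lambda>\<omega>. f (A \<omega>) (C \<omega>) (D \<omega>)) \<in> sets M"
proof -
  have "ev M (\<lambda>\<omega>. f (A \<omega>) (C \<omega>) (D \<omega>)) = (\<Union>x\<in>UNIV. \<Union>y\<in>UNIV. \<Union>z\<in>{z. f x y z}. atm M A C D x y z)"
    by (auto simp: atm_def ev_def)
  then show ?thesis using atm_meas[OF assms] by auto
qed

lemma sum_atoms:
  fixes Z :: "'s \<Rightarrow> real"
  assumes "ev M A \<in> sets M" "ev M C \<in> sets M" "ev M D \<in> sets M" "integrable M Z"
  shows "(LINT \<omega>: ev M (\<lambda>\<omega>. f (A \<omega>) (C \<omega>) (D \<omega>))|M. Z \<omega>) =
    (\<Sum>x\<in>UNIV. \<Sum>y\<in>UNIV. \<Sum>z\<in>UNIV. (if f x y z then 1 else 0) * (LINT \<omega>: atm M A C D x y z|M. Z \<omega>))"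
proof -
  have ints: "integrable M (\<lambda>\<omega>. indicator (atm M A C D x y z) \<omega> *\<^sub>R Z \<omega>)" for x y z
    using integrable_mult_indicator[OF atm_meas[OF assms(1-3)] assms(4)] .
  have pt: "indicator (ev M (\<lambda>\<omega>. f (A \<omega>) (C \<omega>) (D \<omega>))) \<omega> *\<^sub>R Z \<omega> =
     (\<Sum>x\<in>UNIV. \<Sum>y\<in>UNIV. \<Sum>z\<in>UNIV. (if f x y z then 1 else 0) * (indicator (atm M A C D x y z) \<omega> *\<^sub>R Z \<omega>))"
    if "\<omega> \<in> space M" for \<omega>
    using that by (simp add: UNIV_bool atm_def ev_def indicator_def)
  have "(LINT \<omega>: ev M (\<lambda>\<omega>. f (A \<omega>) (C \<omega>) (D \<omega>))|M. Z \<omega>) =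
     (LINT \<omega>|M. (\<Sum>x\<in>UNIV. \<Sum>y\<in>UNIV. \<Sum>z\<in>UNIV. (if f x y z then 1 else 0) * (indicator (atm M A C D x y z) \<omega> *\<^sub>R Z \<omega>)))"
    unfolding set_lebesgue_integral_def by (rule Bochner_Integration.integral_cong[OF refl pt])
  also have "\<dots> = (\<Sum>x\<in>UNIV. \<Sum>y\<in>UNIV. \<Sum>z\<in>UNIV. (if f x y z then 1 else 0) * (LINT \<omega>: atm M A C D x y z|M. Z \<omega>))"
  proof -
    have i2: "integrable M (\<lambda>\<omega>. k * (indicator (atm M A C D x y z) \<omega> * Z \<omega>))" for k x y z
      using ints[of x y z] by simp
    have i1: "integrable M (\<lambda>\<omega>. indicator (atm M A C D x y z) \<omega> * Z \<omega>)" for x y z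
      using ints[of x y z] by simp
    have e1: "(LINT \<omega>|M. (\<Sum>z\<in>UNIV. k z * (indicator (atm M A C D x y z) \<omega> * Z \<omega>)))
       = (\<Sum>z\<in>UNIV. k z * (LINT \<omega>|M. indicator (atm M A C D x y z) \<omega> * Z \<omega>))" for k x y
      by (subst Bochner_Integration.integral_sum) (simp_all add: i1 i2)
    have j1: "integrable M (\<lambda>\<omega>. (\<Sum>z\<in>UNIV. k z * (indicator (atm M A C D x y z) \<omega> * Z \<omega>)))" for k x y
      by (rule Bochner_Integration.integrable_sum) (rule i2)
    have e2: "(LINT \<omega>|M. (\<Sum>y\<in>UNIV. \<Sum>z\<in>UNIV. k y z * (indicator (atm M A C D x y z) \<omega> * Z \<omega>)))
       = (\<Sum>y\<in>UNIV. \<Sum>z\<in>UNIV. k y z * (LINT \<omega>|M. indicator (atm M A C D x y z) \<omega> * Z \<omega>))" for k x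
      by (subst Bochner_Integration.integral_sum) (simp_all add: j1 e1)
    have j2: "integrable M (\<lambda>\<omega>. (\<Sum>y\<in>UNIV. \<Sum>z\<in>UNIV. k y z * (indicator (atm M A C D x y z) \<omega> * Z \<omega>)))" for k x
      by (rule Bochner_Integration.integrable_sum) (rule j1)
    have e3: "(LINT \<omega>|M. (\<Sum>x\<in>UNIV. \<Sum>y\<in>UNIV. \<Sum>z\<in>UNIV. k x y z * (indicator (atm M A C D x y z) \<omega> * Z \<omega>)))
       = (\<Sum>x\<in>UNIV. \<Sum>y\<in>UNIV. \<Sum>z\<in>UNIV. k x y z * (LINT \<omega>|M. indicator (atm M A C D x y z) \<omega> * Z \<omega>))" for k
      by (subst Bochner_Integration.integral_sum) (simp_all add: j2 e2)
    show ?thesis using e3[of "\<lambda>x y z. if f x y z then 1 else 0"] by (simp add: set_lebesgue_integral_def)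
  qed
  finally show ?thesis .
qed

lemma dens_emeasure:
  fixes Y :: "'s \<Rightarrow> real"
  assumes P: "prob_space M" and E: "E \<in> sets M" and Y: "Y \<in> borel_measurable M" and k: "k \<ge> 0"
    and B: "B \<in> sets borel"
  shows "emeasure (distr (density M (\<lambda>\<omega>. ennreal (k * indicator E \<omega>))) borel Y) B
         = ennreal (k * measure M (E \<inter> Y -` B))"
proof -
  interpret prob_space M by (rule P)
  have YB: "Y -` B \<inter> space M \<in> sets M" using Y B by (rule measurable_sets)
  have EB: "E \<inter> Y -` B = E \<inter> (Y -` B \<inter> space M)" using sets.sets_into_space[OF E] by auto
  have EBs: "E \<inter> Y -` B \<in> sets M" using EB E YB by auto
  have dm: "(\<lambda>\<omega>. ennreal (k * indicator E \<omega>)) \<in> borel_measurable M" using E by measurable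
  have "emeasure (distr (density M (\<lambda>\<omega>. ennreal (k * indicator E \<omega>))) borel Y) B
      = emeasure (density M (\<lambda>\<omega>. ennreal (k * indicator E \<omega>))) (Y -` B \<inter> space M)"
    by (subst emeasure_distr) (use Y B in auto)
  also have "\<dots> = (\<integral>\<^sup>+ \<omega>. ennreal (k * indicator E \<omega>) * indicator (Y -` B \<inter> space M) \<omega> \<partial>M)"
    by (rule emeasure_density[OF dm YB])
  also have "\<dots> = (\<integral>\<^sup>+ \<omega>. ennreal k * indicator (E \<inter> Y -` B) \<omega> \<partial>M)"
    by (rule nn_integral_cong) (auto simp: indicator_def)
  also have "\<dots> = ennreal k * emeasure M (E \<inter> Y -` B)"
    by (rule nn_integral_cmult_indicator[OF EBs])
  also have "\<dots> = ennreal (k * measure M (E \<inter> Y -` B))"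
    using k by (simp add: emeasure_eq_measure ennreal_mult)
  finally show ?thesis .
qed

lemma dens_integral:
  fixes Y :: "'s \<Rightarrow> real"
  assumes P: "prob_space M" and E: "E \<in> sets M" and Y: "Y \<in> borel_measurable M" and k: "k \<ge> 0"
  shows "integral\<^sup>L (distr (density M (\<lambda>\<omega>. ennreal (k * indicator E \<omega>))) borel Y) (\<lambda>t. t)
         = k * (LINT \<omega>:E|M. Y \<omega>)"
proof -
  have dm: "(\<lambda>\<omega>. k * indicator E \<omega>) \<in> borel_measurable M" using E by measurable
  have "integral\<^sup>L (distr (density M (\<lambda>\<omega>. ennreal (k * indicator E \<omega>))) borel Y) (\<lambda>t. t)
      = integral\<^sup>L (density M (\<lambda>\<omega>. ennreal (k * indicator E \<omega>))) Y"
    by (subst integral_distr) (use Y in auto)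
  also have "\<dots> = (LINT \<omega>|M. (k * indicator E \<omega>) *\<^sub>R Y \<omega>)"
    by (rule integral_density[OF Y dm]) (use k in auto)
  also have "\<dots> = k * (LINT \<omega>:E|M. Y \<omega>)"
    by (simp add: set_lebesgue_integral_def mult.assoc)
  finally show ?thesis .
qed

lemma factor_int:
  fixes Y :: "'s \<Rightarrow> real"
  assumes P: "prob_space M" and E1: "E1 \<in> sets M" and E2: "E2 \<in> sets M"
    and Y: "Y \<in> borel_measurable M" and k1: "k1 \<ge> 0" and k2: "k2 \<ge> 0"
    and eq: "\<forall>B\<in>sets borel. measure M (E1 \<inter> Y -` B) * k1 = k2 * measure M (E2 \<inter> Y -` B)"
  shows "(LINT \<omega>:E1|M. Y \<omega>) * k1 = k2 * (LINT \<omega>:E2|M. Y \<omega>)"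
proof -
  have N: "distr (density M (\<lambda>\<omega>. ennreal (k1 * indicator E1 \<omega>))) borel Y
         = distr (density M (\<lambda>\<omega>. ennreal (k2 * indicator E2 \<omega>))) borel Y"
  proof (rule measure_eqI)
    fix B assume "B \<in> sets (distr (density M (\<lambda>\<omega>. ennreal (k1 * indicator E1 \<omega>))) borel Y)"
    then have B: "B \<in> sets borel" by simp
    show "emeasure (distr (density M (\<lambda>\<omega>. ennreal (k1 * indicator E1 \<omega>))) borel Y) B
         = emeasure (distr (density M (\<lambda>\<omega>. ennreal (k2 * indicator E2 \<omega>))) borel Y) B"
      using dens_emeasure[OF P E1 Y k1 B] dens_emeasure[OF P E2 Y k2 B] eq B
      by (simp add: mult.commute)
  qed simp
  show ?thesis
    using dens_integral[OF P E1 Y k1] dens_integral[OF P E2 Y k2] N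
    by (simp add: mult.commute)
qed

lemma pr_int:
  assumes "prob_space M" "ev M P \<in> sets M"
  shows "pr M P = (LINT \<omega>: ev M P|M. (1::real))"
  using assms by (simp add: pr_def set_integral_const finite_measure.emeasure_finite[OF prob_space.axioms(1)])

lemma final_crude:
  fixes a b d y1 y2 y3 y4 :: real
  assumes "0<a" "a<1" "0<b" "b<1" "1/2 \<le> a" "a \<le> b" "y1-y2 \<le> y4-y3" "y4-y3 \<le> 0"
  shows "(a * y1 + (1-b) * y2)/(a+(1-b)) - ((1-a) * y3 + b * y4)/((1-a)+b) \<le> (y1+y2-y3-y4)/2"
proof -
  define s where "s = a+(1-b)"
  define t where "t = (1-a)+b"
  define v where "v = y1-y2"
  define u where "u = y4-y3"
  have s: "0 < s" "s \<le> t" using assms by (auto simp: s_def t_def)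
  have t: "0 < t" using assms by (auto simp: t_def)
  have e1: "(a * y1 + (1-b) * y2)/(a+(1-b)) - (y1+y2)/2 = (a+b-1) * v/(2 * s)"
    using s unfolding s_def v_def by (simp add: field_simps; simp add: algebra_simps)
  have e2: "((1-a) * y3 + b * y4)/((1-a)+b) - (y3+y4)/2 = (a+b-1) * u/(2 * t)"
    using t unfolding t_def u_def by (simp add: field_simps; simp add: algebra_simps)
  have vu: "v \<le> u" "u \<le> 0" using assms by (auto simp: v_def u_def)
  have "v/s \<le> u/s" using vu s by (simp add: divide_right_mono)
  also have "u/s \<le> u/t" using vu s t by (simp add: divide_left_mono_neg mult_pos_pos)
  finally have "v/s - u/t \<le> 0" by simp
  then have "(a+b-1) * (v/s - u/t) \<le> 0" using assms by (intro mult_nonneg_nonpos) auto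
  then have h: "(a+b-1) * v/(2 * s) - (a+b-1) * u/(2 * t) \<le> 0" using s t by (simp add: field_simps)
  obtain X U A B where XU: "X = (a+b-1) * v/(2 * s)" "U = (a+b-1) * u/(2 * t)"
    "A = (a * y1 + (1-b) * y2)/(a+(1-b))" "B = ((1-a) * y3 + b * y4)/((1-a)+b)" by blast
  have "A - (y1+y2)/2 = X" "B - (y3+y4)/2 = U" "X - U \<le> 0" using e1 e2 h XU by auto
  then have "A - B \<le> (y1+y2-y3-y4)/2" by (simp add: field_simps)
  then show ?thesis using XU by simp
qed

lemma final_obs:
  fixes a b d y1 y2 y3 y4 :: real
  assumes "0<a" "a<1" "0<b" "b<1" "0<d" "d<1" "1/2 \<le> a" "a \<le> b" "y1-y2 \<le> y4-y3" "y4-y3 \<le> 0"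
  shows "((a * d * y1 + (1-b) * (1-d) * y2)/(a * d+(1-b) * (1-d)) - ((1-a) * d * y3 + b * (1-d) * y4)/((1-a) * d + b * (1-d)))/2
       + ((a * (1-d) * y1 + (1-b) * d * y2)/(a * (1-d)+(1-b) * d) - ((1-a) * (1-d) * y3 + b * d * y4)/((1-a) * (1-d)+b * d))/2
       \<le> (y1+y2-y3-y4)/2"
proof -
  define W1 where "W1 = a * d+(1-b) * (1-d)"
  define W2 where "W2 = a * (1-d)+(1-b) * d"
  define W3 where "W3 = (1-a) * d + b * (1-d)"
  define W4 where "W4 = (1-a) * (1-d)+b * d"
  define v where "v = y1-y2"
  define u where "u = y4-y3"
  have p1: "0 < a * d" "0 < (1-b) * (1-d)" "0 < a * (1-d)" "0 < (1-b) * d" "0 < (1-a) * d" "0 < b * (1-d)" "0 < (1-a) * (1-d)" "0 < b * d"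
    using assms by auto
  have W: "0 < W1" "0 < W2" "0 < W3" "0 < W4" using p1 by (auto simp: W1_def W2_def W3_def W4_def)
  have E1: "(a * d * y1 + (1-b) * (1-d) * y2)/(a * d+(1-b) * (1-d)) = y2 + (a * d/W1) * v"
    using W unfolding W1_def v_def by (simp add: field_simps; simp add: algebra_simps)
  have E2: "(a * (1-d) * y1 + (1-b) * d * y2)/(a * (1-d)+(1-b) * d) = y2 + (a * (1-d)/W2) * v"
    using W unfolding W2_def v_def by (simp add: field_simps; simp add: algebra_simps)
  have E3: "((1-a) * d * y3 + b * (1-d) * y4)/((1-a) * d + b * (1-d)) = y4 - ((1-a) * d/W3) * u"
    using W unfolding W3_def u_def by (simp add: field_simps; simp add: algebra_simps)
  have E4: "((1-a) * (1-d) * y3 + b * d * y4)/((1-a) * (1-d)+b * d) = y4 - ((1-a) * (1-d)/W4) * u"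
    using W unfolding W4_def u_def by (simp add: field_simps; simp add: algebra_simps)
  define L1 where "L1 = a * d/W1 + a * (1-d)/W2 - 1"
  define L2 where "L2 = (1-a) * d/W3 + (1-a) * (1-d)/W4 - 1"
  have ab: "b * (1-b) \<le> a * (1-a)"
  proof -
    have "a * (1-a) - b * (1-b) = (b-a) * (a+b-1)" by (simp add: algebra_simps)
    moreover have "0 \<le> (b-a) * (a+b-1)" using assms by (intro mult_nonneg_nonneg) auto
    ultimately show ?thesis by linarith
  qed
  have c1: "b * d/W4 \<le> a * d/W1"
  proof -
    have "b * d * W1 \<le> a * d * W4"
    proof -
      have "a * d * W4 - b * d * W1 = d * (1-d) * (a * (1-a) - b * (1-b))" unfolding W1_def W4_def by (simp add: algebra_simps)
      moreover have "0 \<le> d * (1-d) * (a * (1-a) - b * (1-b))" using assms ab by (intro mult_nonneg_nonneg) auto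
      ultimately show ?thesis by linarith
    qed
    then show ?thesis using W by (simp add: field_simps)
  qed
  have c2: "b * (1-d)/W3 \<le> a * (1-d)/W2"
  proof -
    have "b * (1-d) * W2 \<le> a * (1-d) * W3"
    proof -
      have "a * (1-d) * W3 - b * (1-d) * W2 = d * (1-d) * (a * (1-a) - b * (1-b))" unfolding W2_def W3_def by (simp add: algebra_simps)
      moreover have "0 \<le> d * (1-d) * (a * (1-a) - b * (1-b))" using assms ab by (intro mult_nonneg_nonneg) auto
      ultimately show ?thesis by linarith
    qed
    then show ?thesis using W by (simp add: field_simps)
  qed
  have bd4: "(1-a) * (1-d)/W4 = 1 - b * d/W4" using W unfolding W4_def by (simp add: field_simps)
  have bd3: "(1-a) * d/W3 = 1 - b * (1-d)/W3" using W unfolding W3_def by (simp add: field_simps)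
  have L12: "0 \<le> L1 + L2" unfolding L1_def L2_def using c1 c2 bd3 bd4 by linarith
  have L1: "0 \<le> L1"
  proof -
    have q: "(1-b) \<le> a" using assms by linarith
    have "W1 * W2 \<le> a * d * W2 + a * (1-d) * W1"
    proof -
      have "a * d * W2 + a * (1-d) * W1 - W1 * W2 = d * (1-d) * (a * a - (1-b) * (1-b))" unfolding W1_def W2_def by (simp add: algebra_simps)
      moreover have "(1-b) * (1-b) \<le> a * a" using q assms by (intro mult_mono) auto
      moreover have "0 \<le> d * (1-d)" using assms by auto
      ultimately show ?thesis by (metis diff_ge_0_iff_ge mult_nonneg_nonneg)
    qed
    then have "1 \<le> a * d/W1 + a * (1-d)/W2" using W by (simp add: field_simps)
    then show ?thesis unfolding L1_def by linarith
  qed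
  have vu: "v \<le> u" "u \<le> 0" using assms by (auto simp: v_def u_def)
  have "v * L1 \<le> u * L1" using vu L1 by (simp add: mult_right_mono)
  moreover have "u * (L1+L2) \<le> 0" using vu L12 by (simp add: mult_nonpos_nonneg)
  ultimately have key: "v * L1 + u * L2 \<le> 0" by (simp add: algebra_simps)
  define r1 where "r1 = a * d/W1"
  define r2 where "r2 = a * (1-d)/W2"
  define r3 where "r3 = (1-a) * d/W3"
  define r4 where "r4 = (1-a) * (1-d)/W4"
  have key2: "v * (r1+r2-1) + u * (r3+r4-1) \<le> 0" using key unfolding L1_def L2_def r1_def r2_def r3_def r4_def .
  have fin: "((y2 + r1 * v) - (y4 - r3 * u))/2 + ((y2 + r2 * v) - (y4 - r4 * u))/2 \<le> (y1+y2-y3-y4)/2"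
  proof -
    have "((y2 + r1 * v) - (y4 - r3 * u))/2 + ((y2 + r2 * v) - (y4 - r4 * u))/2 - (y1+y2-y3-y4)/2
        = (v * (r1+r2-1) + u * (r3+r4-1))/2" unfolding v_def u_def by (simp add: field_simps)
    then show ?thesis using key2 by (simp add: field_simps)
  qed
  show ?thesis unfolding E1 E2 E3 E4 using fin unfolding r1_def r2_def r3_def r4_def .
qed

lemma pr_atoms:
  assumes P: "prob_space M" and m: "ev M A \<in> sets M" "ev M C \<in> sets M" "ev M D \<in> sets M"
  shows "pr M (\<lambda>\<omega>. f (A \<omega>) (C \<omega>) (D \<omega>)) =
    (\<Sum>x\<in>UNIV. \<Sum>y\<in>UNIV. \<Sum>z\<in>UNIV. (if f x y z then 1 else 0) * measure M (atm M A C D x y z))"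
proof -
  have fin: "integrable M (\<lambda>_. (1::real))" using P by (simp add: finite_measure.integrable_const[OF prob_space.axioms(1)])
  have "pr M (\<lambda>\<omega>. f (A \<omega>) (C \<omega>) (D \<omega>)) = (LINT \<omega>: ev M (\<lambda>\<omega>. f (A \<omega>) (C \<omega>) (D \<omega>))|M. (1::real))"
    by (rule pr_int[OF P ev_f_meas[OF m]])
  also have "\<dots> = (\<Sum>x\<in>UNIV. \<Sum>y\<in>UNIV. \<Sum>z\<in>UNIV. (if f x y z then 1 else 0) * (LINT \<omega>: atm M A C D x y z|M. (1::real)))"
    by (rule sum_atoms[OF m fin])
  also have "\<dots> = (\<Sum>x\<in>UNIV. \<Sum>y\<in>UNIV. \<Sum>z\<in>UNIV. (if f x y z then 1 else 0) * measure M (atm M A C D x y z))"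
    using atm_meas[OF m] P by (simp add: set_integral_const finite_measure.emeasure_finite[OF prob_space.axioms(1)])
  finally show ?thesis .
qed

lemma half2:
  fixes p q u v :: real
  shows "(p * (u/2) + q * (v/2))/(u/2 + v/2) = (u * p + v * q)/(u+v)"
proof -
  have e1: "(p * (u/2) + q * (v/2)) = (u * p + v * q)/2" by (simp add: field_simps)
  have e2: "u/2 + v/2 = (u+v)/2" by (simp add: field_simps)
  have e3: "((u * p + v * q)/2)/((u+v)/2) = (u * p + v * q)/(u+v)"
    by (cases "u+v = 0") (simp_all add: field_simps)
  show ?thesis unfolding e1 e2 e3 ..
qed

theorem theorem5:
  fixes M :: "'s measure"
    and A C D :: "'s \<Rightarrow> bool"
    and Y :: "'s \<Rightarrow> real"
  assumes "prob_space M"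
    and "ev M A \<in> sets M" and "ev M C \<in> sets M" and "ev M D \<in> sets M"
    and "Y \<in> borel_measurable M" and "integrable M Y"
    and factor: "\<forall>x y z. \<forall>B \<in> sets borel.
        pr M (\<lambda>\<omega>. A \<omega> = x \<and> C \<omega> = y \<and> D \<omega> = z \<and> Y \<omega> \<in> B) * pr M (\<lambda>\<omega>. C \<omega> = y)
      = pr M (\<lambda>\<omega>. D \<omega> = z \<and> C \<omega> = y) * pr M (\<lambda>\<omega>. A \<omega> = x \<and> C \<omega> = y \<and> Y \<omega> \<in> B)"
    and pos: "\<forall>x y z. pr M (\<lambda>\<omega>. A \<omega> = x \<and> C \<omega> = y \<and> D \<omega> = z) > 0"
    and "pr M C = 0.5"
    and "cpr M D C = cpr M (\<lambda>\<omega>. \<not> D \<omega>) (\<lambda>\<omega>. \<not> C \<omega>)"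
    and "cpr M D C \<ge> 0.5"
    and "cpr M (\<lambda>\<omega>. \<not> A \<omega>) (\<lambda>\<omega>. \<not> C \<omega>) \<ge> cpr M A C"
    and "cpr M A C \<ge> 0.5"
    and "cexp M Y (\<lambda>\<omega>. A \<omega> \<and> C \<omega>) - cexp M Y (\<lambda>\<omega>. A \<omega> \<and> \<not> C \<omega>)
         \<le> cexp M Y (\<lambda>\<omega>. \<not> A \<omega> \<and> \<not> C \<omega>) - cexp M Y (\<lambda>\<omega>. \<not> A \<omega> \<and> C \<omega>)"
    and "cexp M Y (\<lambda>\<omega>. \<not> A \<omega> \<and> \<not> C \<omega>) - cexp M Y (\<lambda>\<omega>. \<not> A \<omega> \<and> C \<omega>) \<le> 0"
  shows "RD_crude M A Y \<le> RD_true M A C Y \<and> RD_obs M A D Y \<le> RD_true M A C Y"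
proof -
  note PS = assms(1)
  note m = assms(2-4)
  interpret prob_space M by (rule PS)
  define P where "P x y z = measure M (atm M A C D x y z)" for x y z
  define J where "J x y z = (LINT \<omega>: atm M A C D x y z|M. Y \<omega>)" for x y z
  have prA: "pr M (\<lambda>\<omega>. f (A \<omega>) (C \<omega>) (D \<omega>)) =
    (\<Sum>x\<in>UNIV. \<Sum>y\<in>UNIV. \<Sum>z\<in>UNIV. (if f x y z then 1 else 0) * P x y z)" for f
    unfolding P_def by (rule pr_atoms[OF PS m])
  have intf: "(LINT \<omega>: ev M (\<lambda>\<omega>. f (A \<omega>) (C \<omega>) (D \<omega>))|M. Y \<omega>) =
    (\<Sum>x\<in>UNIV. \<Sum>y\<in>UNIV. \<Sum>z\<in>UNIV. (if f x y z then 1 else 0) * J x y z)" for f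
    unfolding J_def by (rule sum_atoms[OF m assms(6)])
  have Ppos: "0 < P x y z" for x y z using pos unfolding P_def atm_def pr_def by auto
  have tot: "P True True True + P True True False + P True False True + P True False False
     + P False True True + P False True False + P False False True + P False False False = 1"
  proof -
    have "pr M (\<lambda>\<omega>. True) = 1" unfolding pr_def ev_def by (simp add: prob_space)
    then show ?thesis using prA[of "\<lambda>a c d. True"] by (simp add: UNIV_bool ac_simps)
  qed
  have Patom: "pr M (\<lambda>\<omega>. A \<omega> = x \<and> C \<omega> = y \<and> D \<omega> = z) = P x y z" for x y z
    by (simp add: P_def atm_def pr_def)
  define pc where "pc y = P True y True + P True y False + P False y True + P False y False" for y
  define pdc where "pdc z y = P True y z + P False y z" for z y
  define pac where "pac x y = P x y True + P x y False" for x y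
  define jac where "jac x y = J x y True + J x y False" for x y
  define yv where "yv x y = jac x y / pac x y" for x y
  have pC: "pr M (\<lambda>\<omega>. C \<omega> = y) = pc y" for y
    using prA[of "\<lambda>a c d. c = y"] unfolding pc_def by (cases y) (simp_all add: UNIV_bool ac_simps)
  have pDC: "pr M (\<lambda>\<omega>. D \<omega> = z \<and> C \<omega> = y) = pdc z y" for z y
    using prA[of "\<lambda>a c d. d = z \<and> c = y"] unfolding pdc_def by (cases y; cases z) (simp_all add: UNIV_bool ac_simps)
  have pAC: "pr M (\<lambda>\<omega>. A \<omega> = x \<and> C \<omega> = y) = pac x y" for x y
    using prA[of "\<lambda>a c d. a = x \<and> c = y"] unfolding pac_def by (cases x; cases y) (simp_all add: UNIV_bool ac_simps)
  have iAC: "(LINT \<omega>: ev M (\<lambda>\<omega>. A \<omega> = x \<and> C \<omega> = y)|M. Y \<omega>) = jac x y" for x y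
    using intf[of "\<lambda>a c d. a = x \<and> c = y"] unfolding jac_def by (cases x; cases y) (simp_all add: UNIV_bool ac_simps)
  have F1: "P x y z * pc y = pdc z y * pac x y" for x y z
    using factor[rule_format, of UNIV x y z] unfolding pC[symmetric] pDC[symmetric] pAC[symmetric] Patom[symmetric]
    by simp
  have F2: "J x y z * pc y = pdc z y * jac x y" for x y z
  proof -
    have E2: "ev M (\<lambda>\<omega>. A \<omega> = x \<and> C \<omega> = y) \<in> sets M"
      using ev_f_meas[OF m, of "\<lambda>a c d. a = x \<and> c = y"] by simp
    have k1: "0 \<le> pr M (\<lambda>\<omega>. C \<omega> = y)" by (simp add: pr_def)
    have k2: "0 \<le> pr M (\<lambda>\<omega>. D \<omega> = z \<and> C \<omega> = y)" by (simp add: pr_def)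
    have eq: "\<forall>B\<in>sets borel. measure M (atm M A C D x y z \<inter> Y -` B) * pr M (\<lambda>\<omega>. C \<omega> = y)
       = pr M (\<lambda>\<omega>. D \<omega> = z \<and> C \<omega> = y) * measure M (ev M (\<lambda>\<omega>. A \<omega> = x \<and> C \<omega> = y) \<inter> Y -` B)"
    proof
      fix B :: "real set" assume B: "B \<in> sets borel"
      have s1: "ev M (\<lambda>\<omega>. A \<omega> = x \<and> C \<omega> = y \<and> D \<omega> = z \<and> Y \<omega> \<in> B) = atm M A C D x y z \<inter> Y -` B"
        by (auto simp: ev_def atm_def)
      have s2: "ev M (\<lambda>\<omega>. A \<omega> = x \<and> C \<omega> = y \<and> Y \<omega> \<in> B) = ev M (\<lambda>\<omega>. A \<omega> = x \<and> C \<omega> = y) \<inter> Y -` B"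
        by (auto simp: ev_def)
      show "measure M (atm M A C D x y z \<inter> Y -` B) * pr M (\<lambda>\<omega>. C \<omega> = y)
       = pr M (\<lambda>\<omega>. D \<omega> = z \<and> C \<omega> = y) * measure M (ev M (\<lambda>\<omega>. A \<omega> = x \<and> C \<omega> = y) \<inter> Y -` B)"
        using factor[rule_format, OF B, of x y z] unfolding pr_def[of M "\<lambda>\<omega>. A \<omega> = x \<and> C \<omega> = y \<and> D \<omega> = z \<and> Y \<omega> \<in> B"]
          pr_def[of M "\<lambda>\<omega>. A \<omega> = x \<and> C \<omega> = y \<and> Y \<omega> \<in> B"] s1 s2 .
    qed
    have "J x y z * pr M (\<lambda>\<omega>. C \<omega> = y) = pr M (\<lambda>\<omega>. D \<omega> = z \<and> C \<omega> = y) * (LINT \<omega>: ev M (\<lambda>\<omega>. A \<omega> = x \<and> C \<omega> = y)|M. Y \<omega>)"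
      unfolding J_def by (rule factor_int[OF PS atm_meas[OF m] E2 assms(5) k1 k2 eq])
    then show ?thesis unfolding pC pDC iAC .
  qed
  have pc1: "pc True = 1/2" using pC[of True] assms(9) by simp
  have pc0: "pc False = 1/2" using tot pc1 unfolding pc_def by simp
  have pch: "pc y = 1/2" for y by (cases y) (use pc1 pc0 in auto)
  have pacp: "0 < pac x y" for x y unfolding pac_def using Ppos[of x y True] Ppos[of x y False] by simp
  have pdcp: "0 < pdc z y" for z y unfolding pdc_def using Ppos[of True y z] Ppos[of False y z] by simp
  define a where "a = cpr M A C"
  define b where "b = cpr M (\<lambda>\<omega>. \<not> A \<omega>) (\<lambda>\<omega>. \<not> C \<omega>)"
  define d where "d = cpr M D C"
  have "a = pac True True / pc True" unfolding a_def cpr_def using pAC[of True True] pC[of True] by simp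
  then have ha: "pac True True = a/2" using pc1 by simp
  have "b = pac False False / pc False" unfolding b_def cpr_def using pAC[of False False] pC[of False] by simp
  then have hb: "pac False False = b/2" using pc0 by simp
  have "d = pdc True True / pc True" unfolding d_def cpr_def using pDC[of True True] pC[of True] by simp
  then have hd: "pdc True True = d/2" using pc1 by simp
  have "d = cpr M (\<lambda>\<omega>. \<not> D \<omega>) (\<lambda>\<omega>. \<not> C \<omega>)" unfolding d_def by (rule assms(10))
  then have "d = pdc False False / pc False" unfolding cpr_def using pDC[of False False] pC[of False] by simp
  then have hd': "pdc False False = d/2" using pc0 by simp
  have ha': "pac False True = (1-a)/2" using ha pc1 unfolding pac_def pc_def by simp
  have hb': "pac True False = (1-b)/2" using hb pc0 unfolding pac_def pc_def by simp
  have hdt: "pdc False True = (1-d)/2" using hd pc1 unfolding pdc_def pc_def by simp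
  have hdf: "pdc True False = (1-d)/2" using hd' pc0 unfolding pdc_def pc_def by simp
  have Pv: "P x y z = 2 * pdc z y * pac x y" for x y z using F1[of x y z] pch[of y] by simp
  have Jv: "J x y z = yv x y * P x y z" for x y z
  proof -
    have "jac x y = yv x y * pac x y" unfolding yv_def using pacp[of x y] by simp
    then show ?thesis using F2[of x y z] Pv[of x y z] pch[of y] by simp
  qed
  have a0: "0 < a" "a < 1" using pacp[of True True] pacp[of False True] ha ha' by auto
  have b0: "0 < b" "b < 1" using pacp[of False False] pacp[of True False] hb hb' by auto
  have d0: "0 < d" "d < 1" using pdcp[of True True] pdcp[of False True] hd hdt by auto
  have P8: "P True True True = a*d/2" "P True True False = a*(1-d)/2"
     "P False True True = (1-a)*d/2" "P False True False = (1-a)*(1-d)/2"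
     "P True False True = (1-b)*(1-d)/2" "P True False False = (1-b)*d/2"
     "P False False True = b*(1-d)/2" "P False False False = b*d/2"
    by (simp_all add: Pv ha hb hd hd' ha' hb' hdt hdf)
  define y1 where "y1 = yv True True"
  define y2 where "y2 = yv True False"
  define y3 where "y3 = yv False True"
  define y4 where "y4 = yv False False"
  have cAC: "cexp M Y (\<lambda>\<omega>. A \<omega> \<and> C \<omega>) = y1" unfolding cexp_def y1_def yv_def
    using iAC[of True True] pAC[of True True] by simp
  have cAnC: "cexp M Y (\<lambda>\<omega>. A \<omega> \<and> \<not> C \<omega>) = y2" unfolding cexp_def y2_def yv_def
    using iAC[of True False] pAC[of True False] by simp
  have cnAC: "cexp M Y (\<lambda>\<omega>. \<not> A \<omega> \<and> C \<omega>) = y3" unfolding cexp_def y3_def yv_def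
    using iAC[of False True] pAC[of False True] by simp
  have cnAnC: "cexp M Y (\<lambda>\<omega>. \<not> A \<omega> \<and> \<not> C \<omega>) = y4" unfolding cexp_def y4_def yv_def
    using iAC[of False False] pAC[of False False] by simp
  have prC: "pr M C = 1/2" "pr M (\<lambda>\<omega>. \<not> C \<omega>) = 1/2" using pC[of True] pC[of False] pch by simp_all
  have RT: "RD_true M A C Y = (y1+y2-y3-y4)/2"
    unfolding RD_true_def cAC cAnC cnAC cnAnC prC by (simp add: field_simps)
  have cA: "cexp M Y (\<lambda>\<omega>. A \<omega>) = (a*y1 + (1-b)*y2)/(a+(1-b))"
  proof -
    have "cexp M Y (\<lambda>\<omega>. A \<omega>) = (J True True True + J True True False + J True False True + J True False False)/(P True True True + P True True False + P True False True + P True False False)"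
      unfolding cexp_def using intf[of "\<lambda>a c d. a"] prA[of "\<lambda>a c d. a"] by (simp add: UNIV_bool ac_simps)
    also have "\<dots> = (a*y1 + (1-b)*y2)/(a+(1-b))"
      unfolding Jv y1_def[symmetric] y2_def[symmetric] y3_def[symmetric] y4_def[symmetric] P8
      using a0 b0 d0  by (simp add: field_simps; simp add: algebra_simps)
    finally show ?thesis .
  qed
  have cnA: "cexp M Y (\<lambda>\<omega>. \<not> A \<omega>) = ((1-a)*y3 + b*y4)/((1-a)+b)"
  proof -
    have "cexp M Y (\<lambda>\<omega>. \<not> A \<omega>) = (J False True True + J False True False + J False False True + J False False False)/(P False True True + P False True False + P False False True + P False False False)"
      unfolding cexp_def using intf[of "\<lambda>a c d. \<not> a"] prA[of "\<lambda>a c d. \<not> a"] by (simp add: UNIV_bool ac_simps)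
    also have "\<dots> = ((1-a)*y3 + b*y4)/((1-a)+b)"
      unfolding Jv y1_def[symmetric] y2_def[symmetric] y3_def[symmetric] y4_def[symmetric] P8
      using a0 b0 d0  by (simp add: field_simps; simp add: algebra_simps)
    finally show ?thesis .
  qed
  have cAD: "cexp M Y (\<lambda>\<omega>. A \<omega> \<and> D \<omega>) = (a*d*y1 + (1-b)*(1-d)*y2)/(a*d+(1-b)*(1-d))"
  proof -
    have "cexp M Y (\<lambda>\<omega>. A \<omega> \<and> D \<omega>) = (J True True True + J True False True)/(P True True True + P True False True)"
      unfolding cexp_def using intf[of "\<lambda>a c d. a \<and> d"] prA[of "\<lambda>a c d. a \<and> d"] by (simp add: UNIV_bool ac_simps)
    also have "\<dots> = (a*d*y1 + (1-b)*(1-d)*y2)/(a*d+(1-b)*(1-d))"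
      unfolding Jv y1_def[symmetric] y2_def[symmetric] y3_def[symmetric] y4_def[symmetric] P8
      by (rule half2)
    finally show ?thesis .
  qed
  have cnAD: "cexp M Y (\<lambda>\<omega>. \<not> A \<omega> \<and> D \<omega>) = ((1-a)*d*y3 + b*(1-d)*y4)/((1-a)*d + b*(1-d))"
  proof -
    have "cexp M Y (\<lambda>\<omega>. \<not> A \<omega> \<and> D \<omega>) = (J False True True + J False False True)/(P False True True + P False False True)"
      unfolding cexp_def using intf[of "\<lambda>a c d. \<not> a \<and> d"] prA[of "\<lambda>a c d. \<not> a \<and> d"] by (simp add: UNIV_bool ac_simps)
    also have "\<dots> = ((1-a)*d*y3 + b*(1-d)*y4)/((1-a)*d + b*(1-d))"
      unfolding Jv y1_def[symmetric] y2_def[symmetric] y3_def[symmetric] y4_def[symmetric] P8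
      by (rule half2)
    finally show ?thesis .
  qed
  have cAnD: "cexp M Y (\<lambda>\<omega>. A \<omega> \<and> \<not> D \<omega>) = (a*(1-d)*y1 + (1-b)*d*y2)/(a*(1-d)+(1-b)*d)"
  proof -
    have "cexp M Y (\<lambda>\<omega>. A \<omega> \<and> \<not> D \<omega>) = (J True True False + J True False False)/(P True True False + P True False False)"
      unfolding cexp_def using intf[of "\<lambda>a c d. a \<and> \<not> d"] prA[of "\<lambda>a c d. a \<and> \<not> d"] by (simp add: UNIV_bool ac_simps)
    also have "\<dots> = (a*(1-d)*y1 + (1-b)*d*y2)/(a*(1-d)+(1-b)*d)"
      unfolding Jv y1_def[symmetric] y2_def[symmetric] y3_def[symmetric] y4_def[symmetric] P8
      by (rule half2)
    finally show ?thesis .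
  qed
  have cnAnD: "cexp M Y (\<lambda>\<omega>. \<not> A \<omega> \<and> \<not> D \<omega>) = ((1-a)*(1-d)*y3 + b*d*y4)/((1-a)*(1-d)+b*d)"
  proof -
    have "cexp M Y (\<lambda>\<omega>. \<not> A \<omega> \<and> \<not> D \<omega>) = (J False True False + J False False False)/(P False True False + P False False False)"
      unfolding cexp_def using intf[of "\<lambda>a c d. \<not> a \<and> \<not> d"] prA[of "\<lambda>a c d. \<not> a \<and> \<not> d"] by (simp add: UNIV_bool ac_simps)
    also have "\<dots> = ((1-a)*(1-d)*y3 + b*d*y4)/((1-a)*(1-d)+b*d)"
      unfolding Jv y1_def[symmetric] y2_def[symmetric] y3_def[symmetric] y4_def[symmetric] P8
      by (rule half2)
    finally show ?thesis .
  qed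
  have prD: "pr M D = 1/2" "pr M (\<lambda>\<omega>. \<not> D \<omega>) = 1/2"
  proof -
    have "pr M D = P True True True + P True False True + P False True True + P False False True"
      using prA[of "\<lambda>a c d. d"] by (simp add: UNIV_bool ac_simps)
    then show "pr M D = 1/2" unfolding P8 by (simp add: field_simps; simp add: algebra_simps)
    have "pr M (\<lambda>\<omega>. \<not> D \<omega>) = P True True False + P True False False + P False True False + P False False False"
      using prA[of "\<lambda>a c d. \<not> d"] by (simp add: UNIV_bool ac_simps)
    then show "pr M (\<lambda>\<omega>. \<not> D \<omega>) = 1/2" unfolding P8 by (simp add: field_simps; simp add: algebra_simps)
  qed
  have RC: "RD_crude M A Y = (a*y1 + (1-b)*y2)/(a+(1-b)) - ((1-a)*y3 + b*y4)/((1-a)+b)"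
    unfolding RD_crude_def using cA cnA by simp
  have RO: "RD_obs M A D Y = ((a*d*y1 + (1-b)*(1-d)*y2)/(a*d+(1-b)*(1-d)) - ((1-a)*d*y3 + b*(1-d)*y4)/((1-a)*d + b*(1-d)))/2
       + ((a*(1-d)*y1 + (1-b)*d*y2)/(a*(1-d)+(1-b)*d) - ((1-a)*(1-d)*y3 + b*d*y4)/((1-a)*(1-d)+b*d))/2"
  proof -
    have "RD_obs M A D Y = (cexp M Y (\<lambda>\<omega>. A \<omega> \<and> D \<omega>) - cexp M Y (\<lambda>\<omega>. \<not> A \<omega> \<and> D \<omega>))/2
       + (cexp M Y (\<lambda>\<omega>. A \<omega> \<and> \<not> D \<omega>) - cexp M Y (\<lambda>\<omega>. \<not> A \<omega> \<and> \<not> D \<omega>))/2"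
      unfolding RD_obs_def RD_true_def prD by (simp add: field_simps)
    then show ?thesis unfolding cAD cnAD cAnD cnAnD .
  qed
  have hy: "y1-y2 \<le> y4-y3" "y4-y3 \<le> 0" using assms(14,15) unfolding cAC cAnC cnAC cnAnC by auto
  have ab: "1/2 \<le> a" "a \<le> b" using assms(12,13) unfolding a_def b_def by auto
  show ?thesis unfolding RC RO RT
    using final_crude[OF a0 b0 ab hy] final_obs[OF a0 b0 d0 ab hy] by simp
qed

end
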